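(* Let $q$ be any prime power and let $\mathcal{C}$ be the Hermitian-Lifted Code (defined in the context). Then $\mathcal{C}$ has locality $q$ and availability $q^2-1$: for every coordinate (indexed by a point $P \in \mathcal{X}$) there are $q^2-1$ pairwise disjoint sets of coordinates, each of size $q$ and not containing $P$, such that for every codeword $c \in \mathcal{C}$ the symbol $c_P$ can be recovered from the symbols of $c$ indexed by any one of these sets.
   Context: Let $q$ be a prime power. Let $\mathcal{X} = \{(x,y) \in (\mathbb{F}_{q^2})^2 : x^q + x = y^{q+1}\}$ be the set of affine $\mathbb{F}_{q^2}$-rational points of the Hermitian curve; $|\mathcal{X}| = q^3$. For $\alpha,\beta \in \mathbb{F}_{q^2}$, let $L_{\alpha,\beta}(t) = (\alpha t + \beta, t)$, and $\mathcal{L} = \{L_{\alpha,\beta} : \alpha,\beta \in \mathbb{F}_{q^2}\}$. Let $\mathcal{F}$ be the set of $f \in \mathbb{F}_{q^2}[x,y]$ such that for every $L \in \mathcal{L}$ there exists $g \in \mathbb{F}_{q^2}[t]$ with $\deg g \leq q-1$ and $f(L(t)) = g(t)$ for all $t \in \mathbb{F}_{q^2}$ with $L(t) \in \mathcal{X}$. The Hermitian-Lifted Code is $\mathcal{C} = \{ (f(P))_{P \in \mathcal{X}} : f \in \mathcal{F}\}$. A set $R$ of coordinates not containing $i$ is a recovery set for coordinate $i$ if $c_i$ is determined by $(c_j)_{j\in R}$ for every codeword $c$; a code has locality $r$ and availability $t$ if every coordinate has $t$ pairwise disjoint recovery sets each of size at most $r$. *)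

theory Defs
  imports "HOL-Computational_Algebra.Polynomial"
begin

text \<open>The field F_{q^2} is modelled as a finite field type 'a with CARD('a) = q^2.
  Since every function F^2 -> F over a finite field is a polynomial function,
  elements of F[x,y] are represented by their evaluation maps 'a * 'a => 'a.\<close>

definition prime_power :: "nat \<Rightarrow> bool" where
  "prime_power q \<longleftrightarrow> (\<exists>p k. prime p \<and> k > 0 \<and> q = p ^ k)"

definition herm_points :: "nat \<Rightarrow> ('a::field \<times> 'a) set" where
  "herm_points q = {(x, y). x ^ q + x = y ^ (q + 1)}"

definition herm_line :: "'a::field \<Rightarrow> 'a \<Rightarrow> 'a \<Rightarrow> 'a \<times> 'a" where
  "herm_line \<alpha> \<beta> t = (\<alpha> * t + \<beta>, t)"

definition herm_lift_funs :: "nat \<Rightarrow> ('a::field \<times> 'a \<Rightarrow> 'a) set" where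
  "herm_lift_funs q = {f. \<forall>\<alpha> \<beta>. \<exists>g :: 'a poly. degree g \<le> q - 1 \<and>
      (\<forall>t. herm_line \<alpha> \<beta> t \<in> herm_points q \<longrightarrow> f (herm_line \<alpha> \<beta> t) = poly g t)}"

text \<open>Codewords: evaluation vectors (f(P))_{P in X}, represented as functions on X
  (set to 0 outside X).\<close>
definition herm_lifted_code :: "nat \<Rightarrow> ('a::field \<times> 'a \<Rightarrow> 'a) set" where
  "herm_lifted_code q = (\<lambda>f. \<lambda>P. if P \<in> herm_points q then f P else 0) ` herm_lift_funs q"

definition recovery_set :: "('i \<Rightarrow> 'a::zero) set \<Rightarrow> 'i \<Rightarrow> 'i set \<Rightarrow> bool" where
  "recovery_set C P R \<longleftrightarrow> P \<notin> R \<and>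
     (\<exists>\<phi>. \<forall>c\<in>C. c P = \<phi> (\<lambda>Q. if Q \<in> R then c Q else 0))"

end

theory Submission imports Defs "HOL-Computational_Algebra.Primes" begin

lemma card_of_nat_zero:
  "of_nat (card (UNIV :: 'a::{finite,field} set)) = (0::'a)"
proof -
  have "(\<Sum>x\<in>(UNIV::'a set). x + 1) = (\<Sum>x\<in>UNIV. x)"
    by (rule sum.reindex_bij_witness[of _ "\<lambda>y. y - 1" "\<lambda>y. y + 1"]) auto
  moreover have "(\<Sum>x\<in>(UNIV::'a set). x + 1) = (\<Sum>x\<in>UNIV. x) + of_nat (card (UNIV::'a set))"
    by (simp add: sum.distrib)
  ultimately show ?thesis by simp
qed

lemma char_eq:
  assumes "prime p" "card (UNIV :: 'a::{finite,field} set) = p ^ n" "n > 0"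
  shows "CHAR('a) = p"
proof -
  have "CHAR('a) > 0" by (rule finite_imp_CHAR_pos) simp
  hence pr: "prime CHAR('a)" by (rule prime_CHAR_semidom)
  have "of_nat (p ^ n) = (0::'a)" using card_of_nat_zero[where 'a='a] assms(2) by metis
  hence "CHAR('a) dvd p ^ n" by (simp only: of_nat_eq_0_iff_char_dvd)
  hence "CHAR('a) dvd p" using pr prime_dvd_power by blast
  thus ?thesis using pr assms(1) by (simp add: primes_dvd_imp_eq)
qed

lemma frob:
  assumes "prime p" "k > 0" "q = p ^ k" "card (UNIV :: 'a::{finite,field} set) = q ^ 2"
  shows "((x::'a) + y) ^ q = x ^ q + y ^ q"
proof -
  have "card (UNIV :: 'a set) = p ^ (2*k)" using assms by (simp add: power_mult mult.commute)
  hence c: "CHAR('a) = p" using assms char_eq by (metis mult_pos_pos zero_less_numeral)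
  show ?thesis using assms(1,3) c by (intro freshmans_dream') auto
qed

lemma fermat:
  fixes x :: "'a::{finite,field}"
  shows "x ^ card (UNIV :: 'a set) = x"
proof (cases "x = 0")
  case False
  have "x * (\<Prod>y\<in>UNIV-{0}. x * y) = x * x ^ (card (UNIV :: 'a set) - 1) * \<Prod>(UNIV-{0})"
    by (simp add: prod.distrib mult_ac)
  also have "x * x ^ (card (UNIV :: 'a set) - 1) = x ^ Suc (card (UNIV :: 'a set) - 1)"
    by (subst power_Suc) auto
  also have "Suc (card (UNIV :: 'a set) - 1) = card (UNIV :: 'a set)"
    using finite_UNIV_card_ge_0[where ?'a = 'a] by simp
  also have "(\<Prod>y\<in>UNIV-{0}. x * y) = (\<Prod>y\<in>UNIV-{0}. y)"
    by (rule prod.reindex_bij_witness[of _ "\<lambda>y. y / x" "\<lambda>y. x * y"]) (use False in auto)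
  finally show ?thesis
    by simp
qed (use finite_UNIV_card_ge_0[where ?'a = 'a] in auto)

lemma root_bound:
  fixes c d :: "'a::field"
  assumes "q \<ge> 2"
  shows "card {z. z ^ q + c * z + d = 0} \<le> q"
proof -
  let ?p = "monom 1 q + [:d, c:]"
  have dg: "degree [:d, c:] < degree (monom (1::'a) q)" using assms
    by (simp add: degree_monom_eq)
  hence deg: "degree ?p = q" by (simp add: degree_add_eq_left degree_monom_eq)
  hence "?p \<noteq> 0" using assms by auto
  hence "card {z. poly ?p z = 0} \<le> q" using card_poly_roots_bound deg by metis
  moreover have "{z. poly ?p z = 0} = {z. z ^ q + c * z + d = 0}"
    by (auto simp: poly_monom algebra_simps)
  ultimately show ?thesis by simp
qed

lemma trace_count:
  fixes q :: nat
  assumes frob: "\<And>x y::'a. (x + y) ^ q = x ^ q + y ^ q"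
    and fer: "\<And>x::'a. x ^ (q * q) = x"
    and card: "card (UNIV :: 'a::{finite,field} set) = q ^ 2" and q2: "q \<ge> 2"
  shows "card {z::'a. z ^ q + z = 1} = q"
proof -
  define T where "T = (\<lambda>z::'a. z ^ q + z)"
  define Im where "Im = range T"
  define f where "f = (\<lambda>w. card {z. T z = w})"
  define Fq where "Fq = {w::'a. w ^ q + (-1) * w + 0 = 0}"
  have fle: "f w \<le> q" for w
  proof -
    have "{z. T z = w} = {z. z ^ q + 1 * z + (- w) = 0}" by (auto simp: T_def algebra_simps)
    thus ?thesis unfolding f_def using root_bound[OF q2, of 1 "-w"] by simp
  qed
  have "Im \<subseteq> Fq"
  proof
    fix w assume "w \<in> Im"
    then obtain z where "w = T z" by (auto simp: Im_def)
    hence "w ^ q = z ^ (q * q) + z ^ q" by (simp add: T_def frob power_mult)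
    thus "w \<in> Fq" using \<open>w = T z\<close> by (simp add: fer Fq_def T_def)
  qed
  have cFq: "card Fq \<le> q" unfolding Fq_def by (rule root_bound[OF q2])
  have fin: "finite Im" by simp
  have sum: "q ^ 2 = (\<Sum>w\<in>Im. f w)"
  proof -
    have "UNIV = (\<Union>w\<in>Im. {z. T z = w})" by (auto simp: Im_def)
    hence "card (UNIV::'a set) = card (\<Union>w\<in>Im. {z. T z = w})" by simp
    also have "\<dots> = (\<Sum>w\<in>Im. f w)" unfolding f_def
      by (rule card_UN_disjoint) auto
    finally show ?thesis using card by simp
  qed
  have one: "1 \<in> Fq" by (simp add: Fq_def)
  have "1 \<in> Im"
  proof (rule ccontr)
    assume "1 \<notin> Im"
    hence "Im \<subseteq> Fq - {1}" using \<open>Im \<subseteq> Fq\<close> by auto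
    hence "card Im \<le> card (Fq - {1})" by (intro card_mono) auto
    also have "\<dots> = card Fq - 1" using one by simp
    finally have ci: "card Im \<le> q - 1" using cFq by simp
    have "(\<Sum>w\<in>Im. f w) \<le> (\<Sum>w\<in>Im. q)" by (intro sum_mono fle)
    also have "\<dots> = card Im * q" by simp
    also have "\<dots> \<le> (q - 1) * q" using ci by simp
    also have "\<dots> < q ^ 2" using q2 by (simp add: power2_eq_square)
    finally show False using sum by simp
  qed
  have "(\<Sum>w\<in>Im. f w) = f 1 + (\<Sum>w\<in>Im - {1}. f w)"
    using \<open>1 \<in> Im\<close> fin by (simp add: sum.remove)
  also have "(\<Sum>w\<in>Im - {1}. f w) \<le> (\<Sum>w\<in>Im - {1}. q)" by (intro sum_mono fle)
  also have "\<dots> = (card Im - 1) * q" using \<open>1 \<in> Im\<close> by simp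
  also have "\<dots> \<le> (q - 1) * q"
  proof -
    have "card Im \<le> q" using card_mono[OF _ \<open>Im \<subseteq> Fq\<close>] cFq by simp
    hence "card Im - 1 \<le> q - 1" by linarith
    thus ?thesis by (rule mult_right_mono) simp
  qed
  finally have "q ^ 2 \<le> f 1 + (q - 1) * q" using sum by simp
  moreover have "(q - 1) * q + q = q ^ 2" using q2
    by (simp add: power2_eq_square algebra_simps)
  ultimately have "f 1 \<ge> q" by linarith
  hence "f 1 = q" using fle[of 1] by simp
  thus ?thesis by (simp add: f_def T_def)
qed

lemma on_curve:
  fixes q :: nat and x0 y0 \<alpha> z :: "'a::field"
  assumes frob: "\<And>x y::'a. (x + y) ^ q = x ^ q + y ^ q"
    and fer: "\<And>x::'a. x ^ (q * q) = x"
    and P: "x0 ^ q + x0 = y0 ^ (q + 1)"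
    and g: "\<alpha> - y0 ^ q \<noteq> 0"
    and z: "z ^ q + z = 1" and qpos: "q > 0"
  shows "(\<alpha> * (y0 + (\<alpha> - y0 ^ q) ^ q / z) + (x0 - \<alpha> * y0)) ^ q
          + (\<alpha> * (y0 + (\<alpha> - y0 ^ q) ^ q / z) + (x0 - \<alpha> * y0))
         = (y0 + (\<alpha> - y0 ^ q) ^ q / z) ^ (q + 1)"
proof -
  have sub: "(a - b) ^ q = a ^ q - b ^ q" for a b :: 'a
    using frob[of "a - b" b] by (simp add: algebra_simps)
  define \<gamma> where "\<gamma> = \<alpha> - y0 ^ q"
  define s where "s = \<gamma> ^ q / z"
  define Y where "Y = y0 ^ q"
  define G where "G = \<gamma> ^ q"
  have q0: "q \<noteq> 0" using qpos by simp
  have z0: "z \<noteq> 0" using z q0 by (auto simp: power_0_left)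
  have zq: "z ^ q = 1 - z" using z by (simp add: algebra_simps)
  have z1: "1 - z \<noteq> 0" using z0 zq by (metis power_eq_0_iff)
  have e1: "\<alpha> * (y0 + s) + (x0 - \<alpha> * y0) = x0 + \<alpha> * s" by (simp add: algebra_simps)
  have Gq: "G = \<alpha> ^ q - y0" unfolding G_def \<gamma>_def by (simp add: sub fer flip: power_mult)
  have sq: "s ^ q = \<gamma> / (1 - z)" unfolding s_def
    by (simp add: power_divide fer zq flip: power_mult)
  have "(x0 + \<alpha> * s) ^ q + (x0 + \<alpha> * s) = (x0 ^ q + x0) + \<alpha> ^ q * s ^ q + \<alpha> * s"
    by (simp add: frob power_mult_distrib)
  also have "\<dots> = Y * y0 + (G + y0) * (\<gamma> / (1 - z)) + (\<gamma> + Y) * (G / z)"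
  proof -
    have a1: "x0 ^ q + x0 = Y * y0" using P by (simp add: Y_def)
    have a2: "\<alpha> ^ q = G + y0" using Gq by simp
    have a3: "\<alpha> = \<gamma> + Y" by (simp add: \<gamma>_def Y_def)
    have a4: "s = G / z" by (simp add: s_def G_def)
    show ?thesis unfolding a1 a2 sq by (simp add: a3 a4)
  qed
  also have "\<dots> = (Y + \<gamma> / (1 - z)) * (y0 + G / z)"
    using z0 z1 by (simp add: field_simps)
  also have "\<dots> = (y0 + s) ^ (q + 1)"
  proof -
    have "(y0 + s) ^ (q + 1) = (y0 + s) ^ q * (y0 + s)" by simp
    also have "\<dots> = (Y + \<gamma> / (1 - z)) * (y0 + G / z)"
      by (simp only: frob sq flip: Y_def) (simp add: s_def G_def)
    finally show ?thesis by simp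
  qed
  finally have fin: "(x0 + \<alpha> * s) ^ q + (x0 + \<alpha> * s) = (y0 + s) ^ (q + 1)" .
  show ?thesis using fin unfolding e1[symmetric] by (simp only: s_def \<gamma>_def)
qed

lemma recov:
  fixes R :: "('a::{finite,field} \<times> 'a) set"
  assumes "R \<subseteq> herm_points q" "R \<subseteq> range (herm_line \<alpha> \<beta>)" "card R = q" "q > 0"
    and Pdef: "P = herm_line \<alpha> \<beta> t0" and PX: "P \<in> herm_points q" and "P \<notin> R"
  shows "recovery_set (herm_lifted_code q :: ('a \<times> 'a \<Rightarrow> 'a) set) P R"
proof -
  define Ok where "Ok = (\<lambda>h g. degree g \<le> q - 1 \<and> (\<forall>Q\<in>R. poly g (snd Q) = h Q))"
  define \<phi> where "\<phi> = (\<lambda>h. if \<exists>g. Ok h g then poly (SOME g. Ok h g) t0 else 0)"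
  have sndl: "snd (herm_line \<alpha> \<beta> t) = t" for t by (simp add: herm_line_def)
  have Ql: "Q = herm_line \<alpha> \<beta> (snd Q)" if "Q \<in> R" for Q
    using assms(2) that sndl by auto
  have inj: "inj_on snd R"
    by (rule inj_onI) (metis Ql)
  have cS: "card (snd ` R) = q" using inj assms(3) by (simp add: card_image)
  have "\<forall>c\<in>herm_lifted_code q. c P = \<phi> (\<lambda>Q. if Q \<in> R then c Q else 0)"
  proof
    fix c :: "'a \<times> 'a \<Rightarrow> 'a" assume "c \<in> herm_lifted_code q"
    then obtain f :: "'a \<times> 'a \<Rightarrow> 'a" where f: "f \<in> herm_lift_funs q"
      and c: "c = (\<lambda>P. if P \<in> herm_points q then f P else 0)"
      unfolding herm_lifted_code_def by auto
    obtain g where g: "degree g \<le> q - 1"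
      and gf: "\<And>t. herm_line \<alpha> \<beta> t \<in> herm_points q \<Longrightarrow> f (herm_line \<alpha> \<beta> t) = poly g t"
      using f unfolding herm_lift_funs_def by blast
    define h where "h = (\<lambda>Q. if Q \<in> R then c Q else 0)"
    have okg: "Ok h g" unfolding Ok_def
    proof (intro conjI g ballI)
      fix Q assume Q: "Q \<in> R"
      hence QX: "Q \<in> herm_points q" using assms(1) by auto
      have "poly g (snd Q) = f (herm_line \<alpha> \<beta> (snd Q))"
        using gf Ql[OF Q] QX by metis
      also have "\<dots> = h Q" using Q QX Ql[OF Q] by (simp add: h_def c)
      finally show "poly g (snd Q) = h Q" .
    qed
    hence ex: "\<exists>g. Ok h g" by blast
    define g' where "g' = (SOME g. Ok h g)"
    have okg': "Ok h g'" unfolding g'_def using someI_ex[OF ex] .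
    have "g' = g"
    proof (rule poly_eqI_degree[of "snd ` R"])
      fix x assume "x \<in> snd ` R"
      then obtain Q where "Q \<in> R" "x = snd Q" by auto
      thus "poly g' x = poly g x" using okg okg' unfolding Ok_def by auto
    next
      show "degree g' < card (snd ` R)" using okg' cS assms(4) unfolding Ok_def by linarith
      show "degree g < card (snd ` R)" using g cS assms(4) by linarith
    qed
    have "\<phi> h = poly g t0" using ex \<open>g' = g\<close> unfolding \<phi>_def g'_def by simp
    also have "\<dots> = f P" using gf PX Pdef by metis
    also have "\<dots> = c P" using PX by (simp add: c)
    finally show "c P = \<phi> (\<lambda>Q. if Q \<in> R then c Q else 0)" by (simp add: h_def)
  qed
  thus ?thesis unfolding recovery_set_def using assms(7) by blast
qed

lemma line_sep:
  fixes a a' s x0 y0 :: "'a::field"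
  assumes "s \<noteq> 0" "a * (y0 + s) + (x0 - a * y0) = a' * (y0 + s) + (x0 - a' * y0)"
  shows "a = a'"
proof -
  have "(a - a') * s = 0" using assms(2) by (simp add: algebra_simps)
  thus ?thesis using assms(1) by simp
qed

theorem mainTheorem2:
  fixes q :: nat
  assumes "prime_power q"
    and "card (UNIV :: 'a::{finite, field} set) = q ^ 2"
  shows "\<forall>P \<in> (herm_points q :: ('a \<times> 'a) set).
           \<exists>Rs :: ('a \<times> 'a) set set.
             card Rs = q ^ 2 - 1 \<and> pairwise disjnt Rs \<and>
             (\<forall>R \<in> Rs. R \<subseteq> herm_points q \<and> P \<notin> R \<and> card R = q \<and>
                recovery_set (herm_lifted_code q :: ('a \<times> 'a \<Rightarrow> 'a) set) P R)"
proof
  obtain p k where pk: "prime p" "k > 0" "q = p ^ k"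
    using assms(1) unfolding prime_power_def by blast
  have q2: "q \<ge> 2"
  proof -
    have "p \<ge> 2" using pk(1) by (simp add: prime_ge_2_nat)
    moreover have "p \<le> p ^ k" using pk(1,2) prime_gt_0_nat[OF pk(1)] by (metis One_nat_def Suc_leI self_le_power less_not_refl2)
    ultimately show ?thesis using pk(3) by simp
  qed
  have qpos: "q > 0" using q2 by simp
  have frob: "\<And>x y::'a. (x + y) ^ q = x ^ q + y ^ q"
    using frob[OF pk assms(2)] by blast
  have fer: "\<And>x::'a. x ^ (q * q) = x"
    using fermat[where 'a='a] assms(2) by (simp add: power2_eq_square)
  define Z where "Z = {z::'a. z ^ q + z = 1}"
  have cZ: "card Z = q" unfolding Z_def by (rule trace_count[OF frob fer assms(2) q2])
  have Zn0: "z \<noteq> 0" if "z \<in> Z" for z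
    using that qpos by (auto simp: Z_def power_0_left)
  fix P :: "'a \<times> 'a" assume PX: "P \<in> herm_points q"
  obtain x0 y0 where P: "P = (x0, y0)" by (cases P)
  have Peq: "x0 ^ q + x0 = y0 ^ (q + 1)" using PX P by (simp add: herm_points_def)
  define R where "R = (\<lambda>\<alpha>. (\<lambda>z. herm_line \<alpha> (x0 - \<alpha> * y0) (y0 + (\<alpha> - y0 ^ q) ^ q / z)) ` Z)"
  define A where "A = {\<alpha>::'a. \<alpha> \<noteq> y0 ^ q}"
  have sn0: "(\<alpha> - y0 ^ q) ^ q / z \<noteq> 0" if "\<alpha> \<in> A" "z \<in> Z" for \<alpha> z
    using that Zn0 by (simp add: A_def)
  have memR: "Q \<in> R \<alpha> \<longleftrightarrow> (\<exists>z\<in>Z. Q = (\<alpha> * (y0 + (\<alpha> - y0 ^ q) ^ q / z) + (x0 - \<alpha> * y0),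
      y0 + (\<alpha> - y0 ^ q) ^ q / z))" for Q \<alpha>
    by (auto simp: R_def herm_line_def)
  have RX: "R \<alpha> \<subseteq> herm_points q" if "\<alpha> \<in> A" for \<alpha>
  proof
    fix Q assume "Q \<in> R \<alpha>"
    then obtain z where z: "z \<in> Z" and Q: "Q = (\<alpha> * (y0 + (\<alpha> - y0 ^ q) ^ q / z) + (x0 - \<alpha> * y0),
      y0 + (\<alpha> - y0 ^ q) ^ q / z)" using memR by blast
    have "\<alpha> - y0 ^ q \<noteq> 0" using that by (simp add: A_def)
    from on_curve[OF frob fer Peq this, of z] z qpos
    show "Q \<in> herm_points q" by (simp add: Q herm_points_def Z_def)
  qed
  have PnR: "P \<notin> R \<alpha>" if "\<alpha> \<in> A" for \<alpha>
    using sn0[OF that] by (auto simp: memR P)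
  have cR: "card (R \<alpha>) = q" if "\<alpha> \<in> A" for \<alpha>
  proof -
    have g0: "(\<alpha> - y0 ^ q) ^ q \<noteq> 0" using that by (simp add: A_def)
    have "inj_on (\<lambda>z. herm_line \<alpha> (x0 - \<alpha> * y0) (y0 + (\<alpha> - y0 ^ q) ^ q / z)) Z"
    proof (rule inj_onI)
      fix z z' assume "z \<in> Z" "z' \<in> Z"
        "herm_line \<alpha> (x0 - \<alpha> * y0) (y0 + (\<alpha> - y0 ^ q) ^ q / z) =
         herm_line \<alpha> (x0 - \<alpha> * y0) (y0 + (\<alpha> - y0 ^ q) ^ q / z')"
      hence "(\<alpha> - y0 ^ q) ^ q / z = (\<alpha> - y0 ^ q) ^ q / z'" by (simp add: herm_line_def)
      thus "z = z'" using g0 Zn0 \<open>z \<in> Z\<close> \<open>z' \<in> Z\<close> qpos that by (auto simp: field_simps A_def)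
    qed
    thus ?thesis unfolding R_def using cZ by (simp add: card_image)
  qed
  have disj: "R \<alpha> \<inter> R \<alpha>' = {}" if "\<alpha> \<in> A" "\<alpha>' \<in> A" "\<alpha> \<noteq> \<alpha>'" for \<alpha> \<alpha>'
  proof (rule ccontr)
    assume "R \<alpha> \<inter> R \<alpha>' \<noteq> {}"
    then obtain Q where "Q \<in> R \<alpha>" "Q \<in> R \<alpha>'" by blast
    then obtain z z' where z: "z \<in> Z" "z' \<in> Z"
      and e: "(\<alpha> * (y0 + (\<alpha> - y0 ^ q) ^ q / z) + (x0 - \<alpha> * y0),
      y0 + (\<alpha> - y0 ^ q) ^ q / z) = (\<alpha>' * (y0 + (\<alpha>' - y0 ^ q) ^ q / z') + (x0 - \<alpha>' * y0),
      y0 + (\<alpha>' - y0 ^ q) ^ q / z')" unfolding memR by metis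
    have s: "(\<alpha> - y0 ^ q) ^ q / z = (\<alpha>' - y0 ^ q) ^ q / z'" using e by simp
    hence "\<alpha> * (y0 + (\<alpha> - y0 ^ q) ^ q / z) + (x0 - \<alpha> * y0) =
      \<alpha>' * (y0 + (\<alpha> - y0 ^ q) ^ q / z) + (x0 - \<alpha>' * y0)" using e by simp
    hence "\<alpha> = \<alpha>'" using line_sep sn0[OF that(1) z(1)] by blast
    thus False using that(3) by simp
  qed
  have rec: "recovery_set (herm_lifted_code q :: ('a \<times> 'a \<Rightarrow> 'a) set) P (R \<alpha>)"
    if "\<alpha> \<in> A" for \<alpha>
  proof (rule recov[OF RX[OF that] _ cR[OF that] qpos _ PX PnR[OF that]])
    show "R \<alpha> \<subseteq> range (herm_line \<alpha> (x0 - \<alpha> * y0))" unfolding R_def by auto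
    show "P = herm_line \<alpha> (x0 - \<alpha> * y0) y0" by (simp add: P herm_line_def)
  qed
  have inj: "inj_on R A"
  proof (rule inj_onI)
    fix \<alpha> \<alpha>' assume a: "\<alpha> \<in> A" "\<alpha>' \<in> A" "R \<alpha> = R \<alpha>'"
    show "\<alpha> = \<alpha>'"
    proof (rule ccontr)
      assume "\<alpha> \<noteq> \<alpha>'"
      hence "R \<alpha> = {}" using disj[OF a(1,2)] a(3) by simp
      thus False using cR[OF a(1)] qpos by simp
    qed
  qed
  have cA: "card A = q ^ 2 - 1"
  proof -
    have "A = UNIV - {y0 ^ q}" by (auto simp: A_def)
    thus ?thesis using assms(2) by (simp add: card_Diff_singleton)
  qed
  show "\<exists>Rs :: ('a \<times> 'a) set set.
             card Rs = q ^ 2 - 1 \<and> pairwise disjnt Rs \<and>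
             (\<forall>R \<in> Rs. R \<subseteq> herm_points q \<and> P \<notin> R \<and> card R = q \<and>
                recovery_set (herm_lifted_code q :: ('a \<times> 'a \<Rightarrow> 'a) set) P R)"
  proof (intro exI conjI)
    show "card (R ` A) = q ^ 2 - 1" using inj cA by (simp add: card_image)
    show "pairwise disjnt (R ` A)"
      unfolding pairwise_def disjnt_def using disj by blast
    show "\<forall>S\<in>R ` A. S \<subseteq> herm_points q \<and> P \<notin> S \<and> card S = q \<and>
                recovery_set (herm_lifted_code q :: ('a \<times> 'a \<Rightarrow> 'a) set) P S"
      using RX PnR cR rec by blast
  qed
qed

end
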